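(* There is a constant $c>0$ such that for every $n\ge1$: (i) there is a formula $\phi\in\mathrm{LTL}[\mathsf F]$ with $\mathrm{size}(\phi)\le c\,n$ and $\mathcal L^\omega(\phi)=\mathcal L(\Phi_n)^-\cdot\Sigma^\omega$; and (ii) for every formula $\psi\in\mathsf F(\mathrm{LTL}[\mathsf Y,\mathsf{wY},\mathsf O,\mathsf H])$, if $\mathcal L^\omega(\psi)=\mathcal L(\Phi_n)^-\cdot\Sigma^\omega$ then $\mathrm{size}(\psi)\ge2^n$.
   Context: Fix $n\ge1$ and atomic propositions $AP=\{\tilde p,\tilde q\}\cup\{p_1,\dots,p_n\}\cup\{q_1,\dots,q_n\}$ (distinct), $\Sigma=2^{AP}$. Formulae (negation normal form) are built from literals $p,\neg p$ with $\land,\lor$ and operators $\mathsf X,\mathsf{wX},\mathsf F,\mathsf G,\mathsf Y,\mathsf{wY},\mathsf O,\mathsf H$. Finite-trace semantics on $\sigma\in\Sigma^+$, positions $0\le i<|\sigma|$: $\mathsf X\phi$: $i+1<|\sigma|$ and $\phi$ at $i+1$; $\mathsf{wX}\phi$: $i+1=|\sigma|$ or $\phi$ at $i+1$; $\mathsf F\phi$/$\mathsf G\phi$: $\phi$ at some/every $j$ with $i\le j<|\sigma|$; $\mathsf Y\phi$: $i>0$ and $\phi$ at $i-1$; $\mathsf{wY}\phi$: $i=0$ or $\phi$ at $i-1$; $\mathsf O\phi$/$\mathsf H\phi$: $\phi$ at some/every $0\le j\le i$; $\mathcal L(\phi)=\{\sigma\in\Sigma^+:\sigma,0\models\phi\}$.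 Infinite-trace semantics on $\sigma\in\Sigma^\omega$, positions $i\in\mathbb N$: same clauses except $\mathsf X\phi$ and $\mathsf{wX}\phi$ both mean $\phi$ at $i+1$, and $\mathsf F\phi$/$\mathsf G\phi$ mean $\phi$ at some/every $j\ge i$; $\mathcal L^\omega(\phi)=\{\sigma\in\Sigma^\omega:\sigma,0\models\phi\}$. Size: literals 1, unary operators add 1, binary connectives sum plus 1. $\mathrm{LTL}[S]$: formulae whose temporal operators are in $S$; $\mathsf F(\mathrm{LTL}[S])$: formulae $\mathsf F(\alpha)$ with $\alpha\in\mathrm{LTL}[S]$. The reverse $\sigma^-$ of $\sigma\in\Sigma^+$ satisfies $|\sigma^-|=|\sigma|$ and $\sigma^-[i]=\sigma[|\sigma|-1-i]$; $\mathcal L^-=\{\sigma^-:\sigma\in\mathcal L\}$; $\mathcal L\cdot\Sigma^\omega=\{\sigma\sigma':\sigma\in\mathcal L,\sigma'\in\Sigma^\omega\}$. $\Phi_n := \mathsf{F}\big(\tilde q\land\bigwedge_{i=1}^n\big((q_i\land\mathsf{O}(\tilde p\land p_i))\lor(\neg q_i\land\mathsf{O}(\tilde p\land\neg p_i))\big)\big)$. *)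

theory Defs
  imports Complex_Main
begin

text \<open>Atomic propositions: PT = p-tilde, QT = q-tilde, P i = p_i, Q i = q_i.
  The set AP depends on n; letters of Sigma are subsets of APs n.\<close>
datatype ap = PT | QT | P nat | Q nat

definition APs :: "nat \<Rightarrow> ap set" where
  "APs n = {PT, QT} \<union> P ` {1..n} \<union> Q ` {1..n}"

datatype ltl =
    Pos ap | Neg ap
  | And ltl ltl | Or ltl ltl
  | Nxt ltl | WNxt ltl | Fin ltl | Glob ltl
  | Yest ltl | WYest ltl | Once ltl | Hist ltl

datatype top = TX | TWX | TF | TG | TY | TWY | TO | TH

fun temps :: "ltl \<Rightarrow> top set" where
  "temps (Pos a) = {}"
| "temps (Neg a) = {}"
| "temps (And a b) = temps a \<union> temps b"
| "temps (Or a b) = temps a \<union> temps b"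
| "temps (Nxt a) = insert TX (temps a)"
| "temps (WNxt a) = insert TWX (temps a)"
| "temps (Fin a) = insert TF (temps a)"
| "temps (Glob a) = insert TG (temps a)"
| "temps (Yest a) = insert TY (temps a)"
| "temps (WYest a) = insert TWY (temps a)"
| "temps (Once a) = insert TO (temps a)"
| "temps (Hist a) = insert TH (temps a)"

fun atoms :: "ltl \<Rightarrow> ap set" where
  "atoms (Pos a) = {a}"
| "atoms (Neg a) = {a}"
| "atoms (And a b) = atoms a \<union> atoms b"
| "atoms (Or a b) = atoms a \<union> atoms b"
| "atoms (Nxt a) = atoms a"
| "atoms (WNxt a) = atoms a"
| "atoms (Fin a) = atoms a"
| "atoms (Glob a) = atoms a"
| "atoms (Yest a) = atoms a"
| "atoms (WYest a) = atoms a"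
| "atoms (Once a) = atoms a"
| "atoms (Hist a) = atoms a"

fun fsize :: "ltl \<Rightarrow> nat" where
  "fsize (Pos a) = 1"
| "fsize (Neg a) = 1"
| "fsize (And a b) = fsize a + fsize b + 1"
| "fsize (Or a b) = fsize a + fsize b + 1"
| "fsize (Nxt a) = fsize a + 1"
| "fsize (WNxt a) = fsize a + 1"
| "fsize (Fin a) = fsize a + 1"
| "fsize (Glob a) = fsize a + 1"
| "fsize (Yest a) = fsize a + 1"
| "fsize (WYest a) = fsize a + 1"
| "fsize (Once a) = fsize a + 1"
| "fsize (Hist a) = fsize a + 1"

fun semf :: "ap set list \<Rightarrow> nat \<Rightarrow> ltl \<Rightarrow> bool" where
  "semf s i (Pos a) = (a \<in> s ! i)"
| "semf s i (Neg a) = (a \<notin> s ! i)"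
| "semf s i (And a b) = (semf s i a \<and> semf s i b)"
| "semf s i (Or a b) = (semf s i a \<or> semf s i b)"
| "semf s i (Nxt a) = (i + 1 < length s \<and> semf s (i + 1) a)"
| "semf s i (WNxt a) = (i + 1 = length s \<or> semf s (i + 1) a)"
| "semf s i (Fin a) = (\<exists>j. i \<le> j \<and> j < length s \<and> semf s j a)"
| "semf s i (Glob a) = (\<forall>j. i \<le> j \<and> j < length s \<longrightarrow> semf s j a)"
| "semf s i (Yest a) = (i > 0 \<and> semf s (i - 1) a)"
| "semf s i (WYest a) = (i = 0 \<or> semf s (i - 1) a)"
| "semf s i (Once a) = (\<exists>j\<le>i. semf s j a)"
| "semf s i (Hist a) = (\<forall>j\<le>i. semf s j a)"

fun semw :: "(nat \<Rightarrow> ap set) \<Rightarrow> nat \<Rightarrow> ltl \<Rightarrow> bool" where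
  "semw w i (Pos a) = (a \<in> w i)"
| "semw w i (Neg a) = (a \<notin> w i)"
| "semw w i (And a b) = (semw w i a \<and> semw w i b)"
| "semw w i (Or a b) = (semw w i a \<or> semw w i b)"
| "semw w i (Nxt a) = semw w (i + 1) a"
| "semw w i (WNxt a) = semw w (i + 1) a"
| "semw w i (Fin a) = (\<exists>j\<ge>i. semw w j a)"
| "semw w i (Glob a) = (\<forall>j\<ge>i. semw w j a)"
| "semw w i (Yest a) = (i > 0 \<and> semw w (i - 1) a)"
| "semw w i (WYest a) = (i = 0 \<or> semw w (i - 1) a)"
| "semw w i (Once a) = (\<exists>j\<le>i. semw w j a)"
| "semw w i (Hist a) = (\<forall>j\<le>i. semw w j a)"

definition Lf :: "nat \<Rightarrow> ltl \<Rightarrow> ap set list set" where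
  "Lf n \<phi> = {s. s \<noteq> [] \<and> set s \<subseteq> Pow (APs n) \<and> semf s 0 \<phi>}"

definition Lw :: "nat \<Rightarrow> ltl \<Rightarrow> (nat \<Rightarrow> ap set) set" where
  "Lw n \<phi> = {w. (\<forall>i. w i \<subseteq> APs n) \<and> semw w 0 \<phi>}"

definition conc_omega :: "nat \<Rightarrow> ap set list set \<Rightarrow> (nat \<Rightarrow> ap set) set" where
  "conc_omega n L = {w. \<exists>s\<in>L. \<exists>w'. (\<forall>i. w' i \<subseteq> APs n) \<and>
       w = (\<lambda>i. if i < length s then s ! i else w' (i - length s))}"

fun bigAnd :: "ltl list \<Rightarrow> ltl" where
  "bigAnd [a] = a"
| "bigAnd (a # as) = And a (bigAnd as)"
| "bigAnd [] = Pos QT" (* never used: n \<ge> 1 *)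

definition clause :: "nat \<Rightarrow> ltl" where
  "clause i = Or (And (Pos (Q i)) (Once (And (Pos PT) (Pos (P i)))))
                 (And (Neg (Q i)) (Once (And (Pos PT) (Neg (P i)))))"

definition Phi :: "nat \<Rightarrow> ltl" where
  "Phi n = Fin (And (Pos QT) (bigAnd (map clause [1..<n+1])))"

end

theory Submission
  imports Defs
begin

definition Good :: "nat \<Rightarrow> (nat \<Rightarrow> ap set) \<Rightarrow> bool" where
  "Good n w \<longleftrightarrow> (\<exists>j. QT \<in> w j \<and> (\<forall>i\<in>{1..n}. \<exists>k\<ge>j. PT \<in> w k \<and> (P i \<in> w k \<longleftrightarrow> Q i \<in> w j)))"

lemma semf_bigAnd: "xs \<noteq> [] \<Longrightarrow> semf s j (bigAnd xs) = (\<forall>x\<in>set xs. semf s j x)"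
  by (induction xs rule: bigAnd.induct) auto

lemma semw_bigAnd: "xs \<noteq> [] \<Longrightarrow> semw s j (bigAnd xs) = (\<forall>x\<in>set xs. semw s j x)"
  by (induction xs rule: bigAnd.induct) auto

lemma semf_clause: "semf s j (clause i) \<longleftrightarrow> (\<exists>k\<le>j. PT \<in> s!k \<and> (P i \<in> s!k \<longleftrightarrow> Q i \<in> s!j))"
  unfolding clause_def by auto

lemma Lf_Phi: assumes "n \<ge> 1"
  shows "s \<in> Lf n (Phi n) \<longleftrightarrow> s \<noteq> [] \<and> set s \<subseteq> Pow (APs n) \<and>
    (\<exists>j<length s. QT \<in> s!j \<and> (\<forall>i\<in>{1..n}. \<exists>k\<le>j. PT \<in> s!k \<and> (P i \<in> s!k \<longleftrightarrow> Q i \<in> s!j)))"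
proof -
  have ne: "map clause [1..<n+1] \<noteq> []" using assms by simp
  have st: "set [1..<n+1] = {1..n}" by auto
  have eq: "semf s j (bigAnd (map clause [1..<n+1])) = (\<forall>i\<in>{1..n}. \<exists>k\<le>j. PT \<in> s!k \<and> (P i \<in> s!k \<longleftrightarrow> Q i \<in> s!j))" for j
    unfolding semf_bigAnd[OF ne] st[symmetric] by (simp add: semf_clause del: upt_Suc)
  show ?thesis unfolding Lf_def Phi_def
    by (simp only: semf.simps eq mem_Collect_eq) auto
qed

lemma rev_Lf: assumes "n \<ge> 1"
  shows "t \<in> rev ` Lf n (Phi n) \<longleftrightarrow> t \<noteq> [] \<and> set t \<subseteq> Pow (APs n) \<and>
    (\<exists>j<length t. QT \<in> t!j \<and> (\<forall>i\<in>{1..n}. \<exists>k. j \<le> k \<and> k < length t \<and> PT \<in> t!k \<and> (P i \<in> t!k \<longleftrightarrow> Q i \<in> t!j)))"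
    (is "_ \<longleftrightarrow> ?R")
proof -
  have "t \<in> rev ` Lf n (Phi n) \<longleftrightarrow> rev t \<in> Lf n (Phi n)"
    by (metis image_iff rev_rev_ident)
  also have "\<dots> \<longleftrightarrow> ?R"
  proof
    assume "rev t \<in> Lf n (Phi n)"
    then obtain j where j: "j < length t" "QT \<in> rev t ! j"
      and h: "\<forall>i\<in>{1..n}. \<exists>k\<le>j. PT \<in> rev t!k \<and> (P i \<in> rev t!k \<longleftrightarrow> Q i \<in> rev t!j)"
      and base: "t \<noteq> []" "set t \<subseteq> Pow (APs n)"
      using Lf_Phi[OF assms] by auto
    let ?j = "length t - Suc j"
    have "?j < length t" "QT \<in> t ! ?j" using j by (auto simp: rev_nth)
    moreover have "\<forall>i\<in>{1..n}. \<exists>k. ?j \<le> k \<and> k < length t \<and> PT \<in> t!k \<and> (P i \<in> t!k \<longleftrightarrow> Q i \<in> t!?j)"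
    proof
      fix i assume "i \<in> {1..n}"
      then obtain k where k: "k \<le> j" "PT \<in> rev t!k" "(P i \<in> rev t!k \<longleftrightarrow> Q i \<in> rev t!j)"
        using h by blast
      show "\<exists>k. ?j \<le> k \<and> k < length t \<and> PT \<in> t!k \<and> (P i \<in> t!k \<longleftrightarrow> Q i \<in> t!?j)"
        by (rule exI[of _ "length t - Suc k"]) (use k j in \<open>auto simp: rev_nth\<close>)
    qed
    ultimately show ?R using base by blast
  next
    assume R: ?R
    then obtain j where j: "j < length t" "QT \<in> t ! j"
      and h: "\<forall>i\<in>{1..n}. \<exists>k. j \<le> k \<and> k < length t \<and> PT \<in> t!k \<and> (P i \<in> t!k \<longleftrightarrow> Q i \<in> t!j)"
      by blast
    let ?j = "length t - Suc j"
    have jt: "t ! j = rev t ! ?j" using j by (auto simp: rev_nth)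
    have "?j < length t" "QT \<in> rev t ! ?j" using j jt by auto
    moreover have "\<forall>i\<in>{1..n}. \<exists>k\<le>?j. PT \<in> rev t!k \<and> (P i \<in> rev t!k \<longleftrightarrow> Q i \<in> rev t!?j)"
    proof
      fix i assume "i \<in> {1..n}"
      then obtain k where k: "j \<le> k" "k < length t" "PT \<in> t!k" "(P i \<in> t!k \<longleftrightarrow> Q i \<in> t!j)"
        using h by blast
      have kt: "t ! k = rev t ! (length t - Suc k)" using k by (auto simp: rev_nth)
      show "\<exists>k\<le>?j. PT \<in> rev t!k \<and> (P i \<in> rev t!k \<longleftrightarrow> Q i \<in> rev t!?j)"
        by (rule exI[of _ "length t - Suc k"]) (use k kt jt in auto)
    qed
    ultimately have "\<exists>j<length t. QT \<in> rev t ! j \<and> (\<forall>i\<in>{1..n}. \<exists>k\<le>j. PT \<in> rev t!k \<and> (P i \<in> rev t!k \<longleftrightarrow> Q i \<in> rev t!j))"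
      by blast
    then show "rev t \<in> Lf n (Phi n)" using R Lf_Phi[OF assms] by simp
  qed
  finally show ?thesis .
qed

lemma lang: assumes "n \<ge> 1"
  shows "conc_omega n (rev ` Lf n (Phi n)) = {w. (\<forall>i. w i \<subseteq> APs n) \<and> Good n w}"
proof (intro set_eqI iffI)
  fix w assume "w \<in> conc_omega n (rev ` Lf n (Phi n))"
  then obtain t w' where t: "t \<in> rev ` Lf n (Phi n)" and w': "\<forall>i. w' i \<subseteq> APs n"
    and w: "w = (\<lambda>i. if i < length t then t ! i else w' (i - length t))"
    unfolding conc_omega_def by blast
  from t[unfolded rev_Lf[OF assms]] obtain j where
    base: "set t \<subseteq> Pow (APs n)" and j: "j < length t" "QT \<in> t!j"
    and h: "\<forall>i\<in>{1..n}. \<exists>k. j \<le> k \<and> k < length t \<and> PT \<in> t!k \<and> (P i \<in> t!k \<longleftrightarrow> Q i \<in> t!j)"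
    by blast
  have "\<forall>i. w i \<subseteq> APs n"
    using base w' unfolding w by (auto dest: nth_mem)
  moreover have "Good n w" unfolding Good_def
  proof (rule exI[of _ j], intro conjI ballI)
    show "QT \<in> w j" using j w by simp
    fix i assume "i \<in> {1..n}"
    then obtain k where k: "j \<le> k" "k < length t" "PT \<in> t!k" "(P i \<in> t!k \<longleftrightarrow> Q i \<in> t!j)"
      using h by blast
    show "\<exists>k\<ge>j. PT \<in> w k \<and> (P i \<in> w k \<longleftrightarrow> Q i \<in> w j)"
      by (rule exI[of _ k]) (use k j w in auto)
  qed
  ultimately show "w \<in> {w. (\<forall>i. w i \<subseteq> APs n) \<and> Good n w}" by blast
next
  fix w assume "w \<in> {w. (\<forall>i. w i \<subseteq> APs n) \<and> Good n w}"
  then have wA: "\<forall>i. w i \<subseteq> APs n" and g: "Good n w" by auto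
  from g obtain j where j: "QT \<in> w j" and h: "\<forall>i\<in>{1..n}. \<exists>k\<ge>j. PT \<in> w k \<and> (P i \<in> w k \<longleftrightarrow> Q i \<in> w j)"
    unfolding Good_def by blast
  obtain K where K: "\<forall>i\<in>{1..n}. K i \<ge> j \<and> PT \<in> w (K i) \<and> (P i \<in> w (K i) \<longleftrightarrow> Q i \<in> w j)"
    using h by metis
  define N where "N = Suc (j + (\<Sum>i\<in>{1..n}. K i))"
  have KN: "K i < N" if "i \<in> {1..n}" for i
  proof -
    have "K i \<le> (\<Sum>i\<in>{1..n}. K i)" using that by (intro member_le_sum) auto
    then show ?thesis unfolding N_def by simp
  qed
  have jN: "j < N" unfolding N_def by simp
  define t where "t = map w [0..<N]"
  have lt: "length t = N" unfolding t_def by simp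
  have tn: "k < N \<Longrightarrow> t ! k = w k" for k unfolding t_def by simp
  have "t \<in> rev ` Lf n (Phi n)"
    unfolding rev_Lf[OF assms]
  proof (intro conjI exI[of _ j])
    show "t \<noteq> []" using jN lt by auto
    show "set t \<subseteq> Pow (APs n)" using wA unfolding t_def by auto
    show "j < length t" using jN lt by simp
    show "QT \<in> t ! j" using jN tn j by simp
    show "\<forall>i\<in>{1..n}. \<exists>k. j \<le> k \<and> k < length t \<and> PT \<in> t!k \<and> (P i \<in> t!k \<longleftrightarrow> Q i \<in> t!j)"
    proof
      fix i assume i: "i \<in> {1..n}"
      show "\<exists>k. j \<le> k \<and> k < length t \<and> PT \<in> t!k \<and> (P i \<in> t!k \<longleftrightarrow> Q i \<in> t!j)"
        by (rule exI[of _ "K i"]) (use K[rule_format, OF i] KN[OF i] jN tn lt in auto)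
    qed
  qed
  moreover have "w = (\<lambda>i. if i < length t then t ! i else (\<lambda>m. w (m + N)) (i - length t))"
  proof
    fix i show "w i = (if i < length t then t ! i else (\<lambda>m. w (m + N)) (i - length t))"
      using lt tn by (cases "i < N") simp_all
  qed
  ultimately show "w \<in> conc_omega n (rev ` Lf n (Phi n))"
    unfolding conc_omega_def
    apply (intro CollectI bexI[of _ t] exI[of _ "\<lambda>m. w (m + N)"])
    using wA by auto
qed

definition clauseF :: "nat \<Rightarrow> ltl" where
  "clauseF i = Or (And (Pos (Q i)) (Fin (And (Pos PT) (Pos (P i)))))
                 (And (Neg (Q i)) (Fin (And (Pos PT) (Neg (P i)))))"

definition PhiF :: "nat \<Rightarrow> ltl" where
  "PhiF n = Fin (And (Pos QT) (bigAnd (map clauseF [1..<n+1])))"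

lemma temps_bigAnd: "temps (bigAnd xs) \<subseteq> \<Union>(temps ` set xs)"
  by (induction xs rule: bigAnd.induct) auto

lemma atoms_bigAnd: "atoms (bigAnd xs) \<subseteq> insert QT (\<Union>(atoms ` set xs))"
  by (induction xs rule: bigAnd.induct) auto

lemma fsize_bigAnd: "xs \<noteq> [] \<Longrightarrow> (\<forall>x\<in>set xs. fsize x = c) \<Longrightarrow> fsize (bigAnd xs) + 1 = (c + 1) * length xs"
  by (induction xs rule: bigAnd.induct) auto

lemma PhiF_props: assumes "n \<ge> 1"
  shows "temps (PhiF n) \<subseteq> {TF}" "atoms (PhiF n) \<subseteq> APs n" "fsize (PhiF n) = 14 * n + 2"
    "semw w 0 (PhiF n) = Good n w"
proof -
  have ne: "map clauseF [1..<n+1] \<noteq> []" using assms by simp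
  have st: "set [1..<n+1] = {1..n}" by auto
  have tc: "\<Union>(temps ` set (map clauseF [1..<n+1])) \<subseteq> {TF}"
    by (auto simp: clauseF_def simp del: upt_Suc)
  show "temps (PhiF n) \<subseteq> {TF}"
    using temps_bigAnd[of "map clauseF [1..<n+1]"] tc unfolding PhiF_def by (simp del: upt_Suc)
  have ac: "\<Union>(atoms ` set (map clauseF [1..<n+1])) \<subseteq> APs n"
    unfolding set_map st by (auto simp: clauseF_def APs_def)
  have "QT \<in> APs n" by (simp add: APs_def)
  then show "atoms (PhiF n) \<subseteq> APs n"
    using atoms_bigAnd[of "map clauseF [1..<n+1]"] ac unfolding PhiF_def by (simp del: upt_Suc) blast
  have "fsize (bigAnd (map clauseF [1..<n+1])) + 1 = 14 * n"
  proof -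
    have h: "\<forall>x\<in>set (map clauseF xs). fsize x = 13" for xs by (auto simp: clauseF_def)
    have l: "length (map clauseF [1..<n+1]) = n" by simp
    define xs where "xs = map clauseF [1..<n+1]"
    have "xs \<noteq> []" "length xs = n" "\<forall>x\<in>set xs. fsize x = 13" using ne l h unfolding xs_def by blast+
    then have "fsize (bigAnd xs) + 1 = 14 * n" using fsize_bigAnd[of xs 13] by simp
    then show ?thesis unfolding xs_def .
  qed
  then show "fsize (PhiF n) = 14 * n + 2" unfolding PhiF_def fsize.simps by linarith
  have eq: "semw w j (bigAnd (map clauseF [1..<n+1])) = (\<forall>i\<in>{1..n}. \<exists>k\<ge>j. PT \<in> w k \<and> (P i \<in> w k \<longleftrightarrow> Q i \<in> w j))" for j
    unfolding semw_bigAnd[OF ne] st[symmetric] by (auto simp: clauseF_def simp del: upt_Suc)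
  show "semw w 0 (PhiF n) = Good n w"
    unfolding PhiF_def Good_def by (simp only: semw.simps eq) auto
qed

fun subs :: "ltl \<Rightarrow> ltl set" where
  "subs (Pos a) = {Pos a}"
| "subs (Neg a) = {Neg a}"
| "subs (And a b) = insert (And a b) (subs a \<union> subs b)"
| "subs (Or a b) = insert (Or a b) (subs a \<union> subs b)"
| "subs (Nxt a) = insert (Nxt a) (subs a)"
| "subs (WNxt a) = insert (WNxt a) (subs a)"
| "subs (Fin a) = insert (Fin a) (subs a)"
| "subs (Glob a) = insert (Glob a) (subs a)"
| "subs (Yest a) = insert (Yest a) (subs a)"
| "subs (WYest a) = insert (WYest a) (subs a)"
| "subs (Once a) = insert (Once a) (subs a)"
| "subs (Hist a) = insert (Hist a) (subs a)"

lemma finite_subs: "finite (subs a)"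
  by (induction a) auto

lemma card_subs: "card (subs a) \<le> fsize a"
proof (induction a)
  case (And a b)
  have "card (subs (And a b)) \<le> Suc (card (subs a \<union> subs b))"
    by (simp add: card_insert_le_m1 finite_subs card_insert_if)
  also have "\<dots> \<le> Suc (card (subs a) + card (subs b))" using card_Un_le by simp
  finally show ?case using And by simp
next
  case (Or a b)
  have "card (subs (Or a b)) \<le> Suc (card (subs a \<union> subs b))"
    by (simp add: card_insert_le_m1 finite_subs card_insert_if)
  also have "\<dots> \<le> Suc (card (subs a) + card (subs b))" using card_Un_le by simp
  finally show ?case using Or by simp
qed (auto simp: card_insert_if finite_subs)

lemma subs_self: "a \<in> subs a"
  by (cases a) auto

lemma subs_trans: "b \<in> subs a \<Longrightarrow> subs b \<subseteq> subs a"
  by (induction a) auto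

lemma temps_subs: "b \<in> subs a \<Longrightarrow> temps b \<subseteq> temps a"
  by (induction a) auto

lemma local: "temps b \<subseteq> {TY, TWY, TO, TH} \<Longrightarrow> (\<forall>m\<le>i. w m = w' m) \<Longrightarrow> semw w i b = semw w' i b"
proof (induction b arbitrary: i)
  case (Yest b) then show ?case by (cases i) auto
next
  case (WYest b) then show ?case by (cases i) auto
next
  case (Once b)
  then have "\<forall>j\<le>i. semw w j b = semw w' j b" by auto
  then show ?case by auto
next
  case (Hist b)
  then have "\<forall>j\<le>i. semw w j b = semw w' j b" by auto
  then show ?case by auto
qed auto

lemma once_suc: "semw w (Suc j) (Once a) = (semw w (Suc j) a \<or> semw w j (Once a))"
  by (auto simp: le_Suc_eq)

lemma hist_suc: "semw w (Suc j) (Hist a) = (semw w (Suc j) a \<and> semw w j (Hist a))"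
  by (auto simp: le_Suc_eq)

lemma step: "temps b \<subseteq> {TY, TWY, TO, TH} \<Longrightarrow> (\<forall>g\<in>subs b. semw w j g = semw w' j' g) \<Longrightarrow>
   w (Suc j) = w' (Suc j') \<Longrightarrow> semw w (Suc j) b = semw w' (Suc j') b"
proof (induction b)
  case (Once b)
  have "semw w j (Once b) = semw w' j' (Once b)" using Once.prems(2) by simp
  then show ?case using Once by (simp only: once_suc) auto
next
  case (Hist b)
  have "semw w j (Hist b) = semw w' j' (Hist b)" using Hist.prems(2) by simp
  then show ?case using Hist by (simp only: hist_suc) auto
qed (auto simp: subs_self)

lemma transfer:
  assumes "temps a \<subseteq> {TY, TWY, TO, TH}" "\<forall>g\<in>subs a. semw w j g = semw w' j' g"
    "\<forall>k\<ge>1. w (j + k) = w' (j' + k)"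
  shows "\<forall>g\<in>subs a. semw w (j + k) g = semw w' (j' + k) g"
proof (induction k)
  case 0 then show ?case using assms by simp
next
  case (Suc k)
  show ?case
  proof
    fix g assume g: "g \<in> subs a"
    have "temps g \<subseteq> {TY, TWY, TO, TH}" using temps_subs[OF g] assms(1) by blast
    moreover have "\<forall>h\<in>subs g. semw w (j + k) h = semw w' (j' + k) h"
      using Suc subs_trans[OF g] by blast
    moreover have "w (Suc (j + k)) = w' (Suc (j' + k))" using assms(3)[rule_format, of "Suc k"] by simp
    ultimately show "semw w (j + Suc k) g = semw w' (j' + Suc k) g"
      using step[of g w "j + k" w' "j' + k"] by simp
  qed
qed

definition ql :: "nat set \<Rightarrow> ap set" where "ql b = insert QT (Q ` b)"
definition pl :: "nat set \<Rightarrow> ap set" where "pl b = insert PT (P ` b)"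

definition Z :: "nat set list \<Rightarrow> nat \<Rightarrow> ap set" where
  "Z us = (\<lambda>m. if m = 0 then {} else if m \<le> length us then ql (us!(m-1)) else {})"

definition W :: "nat set list \<Rightarrow> nat set \<Rightarrow> nat \<Rightarrow> ap set" where
  "W us b = (\<lambda>m. if m = Suc (length us) then pl b else Z us m)"

lemma Z_APs: assumes "set us \<subseteq> Pow {1..n}" shows "Z us i \<subseteq> APs n"
proof (cases "0 < i \<and> i \<le> length us")
  case True
  then have "us ! (i - 1) \<in> set us" by (intro nth_mem) linarith
  then have "us ! (i - 1) \<subseteq> {1..n}" using assms by blast
  then show ?thesis using True unfolding Z_def ql_def APs_def by auto
qed (auto simp: Z_def)

lemma W_APs: "set us \<subseteq> Pow {1..n} \<Longrightarrow> b \<subseteq> {1..n} \<Longrightarrow> W us b i \<subseteq> APs n"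
  using Z_APs[of us n i] unfolding W_def pl_def APs_def by auto

lemma Z_not_Good: assumes "n \<ge> 1" shows "\<not> Good n (Z us)"
proof
  assume "Good n (Z us)"
  then obtain k where "PT \<in> Z us k" unfolding Good_def using assms by fastforce
  then show False unfolding Z_def ql_def by (auto split: if_splits)
qed

lemma W_Good: assumes "b \<in> set us" shows "Good n (W us b)"
proof -
  obtain p where p: "p < length us" "us ! p = b" using assms by (auto simp: in_set_conv_nth)
  show ?thesis unfolding Good_def
  proof (rule exI[of _ "Suc p"], intro conjI ballI)
    show "QT \<in> W us b (Suc p)" using p by (simp add: W_def Z_def ql_def)
    fix i
    show "\<exists>k\<ge>Suc p. PT \<in> W us b k \<and> (P i \<in> W us b k \<longleftrightarrow> Q i \<in> W us b (Suc p))"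
      by (rule exI[of _ "Suc (length us)"]) (use p in \<open>auto simp: W_def Z_def ql_def pl_def\<close>)
  qed
qed

lemma W_Good_inv: assumes "n \<ge> 1" "Good n (W us b)" "set us \<subseteq> Pow {1..n}" "b \<subseteq> {1..n}"
  shows "b \<in> set us"
proof -
  obtain j where j: "QT \<in> W us b j" and h: "\<forall>i\<in>{1..n}. \<exists>k\<ge>j. PT \<in> W us b k \<and> (P i \<in> W us b k \<longleftrightarrow> Q i \<in> W us b j)"
    using assms(2) unfolding Good_def by blast
  have j1: "1 \<le> j" "j \<le> length us" and Wj: "W us b j = ql (us ! (j - 1))"
    using j by (auto simp: W_def Z_def pl_def split: if_splits)
  have PTk: "PT \<in> W us b k \<Longrightarrow> W us b k = pl b" for k
    by (auto simp: W_def Z_def ql_def split: if_splits)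
  have "i \<in> b \<longleftrightarrow> i \<in> us ! (j - 1)" if i: "i \<in> {1..n}" for i
  proof -
    obtain k where "PT \<in> W us b k" "P i \<in> W us b k \<longleftrightarrow> Q i \<in> W us b j" using h i by blast
    then show ?thesis using PTk Wj by (auto simp: pl_def ql_def)
  qed
  moreover have "us ! (j - 1) \<in> set us" using j1 by simp
  moreover then have "us ! (j - 1) \<subseteq> {1..n}" using assms(3) by auto
  ultimately have "b = us ! (j - 1)" using assms(4) by blast
  then show ?thesis using j1 by simp
qed

lemma core:
  assumes n: "n \<ge> 1" and pa: "temps a \<subseteq> {TY, TWY, TO, TH}"
    and L: "Lw n (Fin a) = {w. (\<forall>i. w i \<subseteq> APs n) \<and> Good n w}"
    and us: "set us \<subseteq> Pow {1..n}" and us': "set us' \<subseteq> Pow {1..n}" and b: "b \<in> set us"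
    and eqv: "\<forall>g\<in>subs a. semw (Z us) (length us) g = semw (Z us') (length us') g"
  shows "b \<in> set us'"
proof -
  have bn: "b \<subseteq> {1..n}" using us b by auto
  have "W us b \<in> Lw n (Fin a)" unfolding L using W_APs[OF us bn] W_Good[OF b] by blast
  then obtain j where j: "semw (W us b) j a" unfolding Lw_def by auto
  have "Z us \<notin> Lw n (Fin a)" unfolding L using Z_not_Good[OF n] by blast
  then have nZ: "\<not> semw (Z us) m a" for m using Z_APs[OF us] unfolding Lw_def by auto
  have pg: "temps g \<subseteq> {TY, TWY, TO, TH}" if "g \<in> subs a" for g using temps_subs[OF that] pa by blast
  have "\<not> j \<le> length us"
  proof
    assume "j \<le> length us"
    then have "semw (W us b) j a = semw (Z us) j a"
      by (intro local[OF pa]) (auto simp: W_def)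
    then show False using j nZ by simp
  qed
  then obtain k where k: "j = length us + k" by (metis le_add_diff_inverse nat_le_linear)
  have e1: "\<forall>g\<in>subs a. semw (W us b) (length us) g = semw (W us' b) (length us') g"
  proof
    fix g assume g: "g \<in> subs a"
    have "semw (W us b) (length us) g = semw (Z us) (length us) g"
      by (intro local[OF pg[OF g]]) (auto simp: W_def)
    moreover have "semw (W us' b) (length us') g = semw (Z us') (length us') g"
      by (intro local[OF pg[OF g]]) (auto simp: W_def)
    ultimately show "semw (W us b) (length us) g = semw (W us' b) (length us') g" using eqv g by simp
  qed
  have e2: "\<forall>k\<ge>1. W us b (length us + k) = W us' b (length us' + k)"
    by (auto simp: W_def Z_def)
  have "semw (W us' b) (length us' + k) a"
    using transfer[OF pa e1 e2, of k] subs_self[of a] j k by auto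
  then have "W us' b \<in> Lw n (Fin a)" unfolding Lw_def using W_APs[OF us' bn] by auto
  then have "Good n (W us' b)" unfolding L by blast
  then show ?thesis using W_Good_inv[OF n _ us' bn] by blast
qed

lemma lower:
  assumes n: "n \<ge> 1" and pa: "temps a \<subseteq> {TY, TWY, TO, TH}"
    and L: "Lw n (Fin a) = {w. (\<forall>i. w i \<subseteq> APs n) \<and> Good n w}"
  shows "2 ^ n \<le> fsize (Fin a)"
proof -
  define U where "U = Pow (Pow {1..n::nat})"
  define us where "us B = (SOME l. set l = B)" for B :: "nat set set"
  have us_set: "set (us B) = B" if "B \<in> U" for B
  proof -
    have "finite B" using that unfolding U_def by (meson PowD finite_Pow_iff finite_atLeastAtMost finite_subset)
    then have "\<exists>l. set l = B" by (rule finite_list)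
    then show ?thesis unfolding us_def by (rule someI_ex)
  qed
  define val where "val B = {g \<in> subs a. semw (Z (us B)) (length (us B)) g}" for B
  have sub: "B \<subseteq> B'" if "B \<in> U" "B' \<in> U" "val B = val B'" for B B'
  proof
    fix b assume "b \<in> B"
    have eqv: "\<forall>g\<in>subs a. semw (Z (us B)) (length (us B)) g = semw (Z (us B')) (length (us B')) g"
      using that(3) unfolding val_def by blast
    have "b \<in> set (us B')"
      by (rule core[OF n pa L _ _ _ eqv]) (use that us_set \<open>b \<in> B\<close> in \<open>auto simp: U_def\<close>)
    then show "b \<in> B'" using us_set that by simp
  qed
  have inj: "inj_on val U"
    by (intro inj_onI equalityI) (use sub in metis)+
  have "val ` U \<subseteq> Pow (subs a)" unfolding val_def by auto
  then have "card U \<le> card (Pow (subs a))"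
    using card_inj_on_le[OF inj] finite_subs by (simp add: finite_Pow_iff)
  then have "2 ^ (2 ^ n) \<le> (2::nat) ^ card (subs a)"
    unfolding U_def by (simp add: card_Pow finite_subs)
  then have "2 ^ n \<le> card (subs a)" by simp
  then show ?thesis using card_subs[of a] by simp
qed

theorem lemma7:
  shows "\<exists>c::real. c > 0 \<and> (\<forall>n::nat. n \<ge> 1 \<longrightarrow>
    ((\<exists>\<phi>. temps \<phi> \<subseteq> {TF} \<and> atoms \<phi> \<subseteq> APs n \<and> real (fsize \<phi>) \<le> c * real n \<and>
         Lw n \<phi> = conc_omega n (rev ` Lf n (Phi n)))
     \<and> (\<forall>\<psi> \<alpha>. \<psi> = Fin \<alpha> \<and> temps \<alpha> \<subseteq> {TY, TWY, TO, TH} \<and> atoms \<psi> \<subseteq> APs n \<and>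
         Lw n \<psi> = conc_omega n (rev ` Lf n (Phi n)) \<longrightarrow> fsize \<psi> \<ge> 2 ^ n)))"
proof (intro exI[of _ 16] conjI allI impI)
  fix n :: nat assume n: "n \<ge> 1"
  show "\<exists>\<phi>. temps \<phi> \<subseteq> {TF} \<and> atoms \<phi> \<subseteq> APs n \<and> real (fsize \<phi>) \<le> 16 * real n \<and>
         Lw n \<phi> = conc_omega n (rev ` Lf n (Phi n))"
  proof (intro exI[of _ "PhiF n"] conjI)
    show "temps (PhiF n) \<subseteq> {TF}" "atoms (PhiF n) \<subseteq> APs n" using PhiF_props[OF n] by auto
    show "real (fsize (PhiF n)) \<le> 16 * real n" using PhiF_props(3)[OF n] n by simp
    show "Lw n (PhiF n) = conc_omega n (rev ` Lf n (Phi n))"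
      unfolding lang[OF n] Lw_def using PhiF_props(4)[OF n] by auto
  qed
next
  fix n :: nat and \<psi> \<alpha> assume n: "n \<ge> 1" and h: "\<psi> = Fin \<alpha> \<and> temps \<alpha> \<subseteq> {TY, TWY, TO, TH} \<and> atoms \<psi> \<subseteq> APs n \<and>
         Lw n \<psi> = conc_omega n (rev ` Lf n (Phi n))"
  show "fsize \<psi> \<ge> 2 ^ n"
    using lower[OF n, of \<alpha>] lang[OF n] h by auto
qed (simp)

end
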